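(* Let $p\colon X\to B_1$ and $q\colon Y\to B_2$ be Boolean sets with binary meets and let $\varphi\colon X\to Y$ be a morphism of Boolean sets. Then $\varphi$ preserves binary meets if and only if the relational covering morphism $\hat\varphi\colon Y^{\ast}\to X^{\ast}$ (where $\hat\varphi(G)$ is the set of ultrafilters $H$ of $X$ with $H\subseteq\varphi^{-1}(G)$) is a partial map, i.e. $|\hat\varphi(G)|\le 1$ for every ultrafilter $G$ of $Y$.
   Context: Convention: a "Boolean algebra" means a generalized Boolean algebra (relatively complemented distributive lattice with $0$); morphisms preserve lattice operations, $0$ and relative complements. Boolean set: a presheaf of sets $p\colon X\to B$ over a Boolean algebra $B$ (pairwise disjoint $X_e$, restriction maps $x\mapsto x|^e_f$ for $e\ge f$ with $|^e_e=\mathrm{id}$, $(x|^e_f)|^f_g=x|^e_g$) with all $X_e\ne\emptyset$, such that under the order $x\le y$ iff $p(x)\le p(y)$ and $x=y|^{p(y)}_{p(x)}$ there is a least element $0$, compatible pairs ($x\wedge y$ exists and $p(x\wedge y)=p(x)\wedge p(y)$) have joins, and $p(x)=0\Rightarrow x=0$. It has binary meets if $x\wedge y$ exists for all $x,y$. A morphism of Boolean sets is $\varphi\colon X\to Y$ with a Boolean algebra morphism $\overline{\varphi}\colon B_1\to B_2$ such that $q\varphi=\overline{\varphi}p$ and $\varphi(x|^a_b)=\varphi(x)|^{\overline{\varphi}(a)}_{\overline{\varphi}(b)}$; it preserves binary meets if $\varphi(x\wedge y)=\varphi(x)\wedge\varphi(y)$. Dual étalé spaces: $X^{\ast}$ (resp.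 $Y^{\ast}$) is the set of ultrafilters (maximal proper non-empty down-directed upward-closed subsets) of $X$ (resp. $Y$), topologized by the basis $L(a)=\{G: a\in G\}$, projecting to the ultrafilter spaces of $B_1$, $B_2$ via $G\mapsto p(G)$ (resp. $q(G)$). The map $\hat\varphi$ has underlying map $F\mapsto\overline{\varphi}^{-1}(F)$ on ultrafilters of $B_2$. *)

theory Defs
  imports Main
begin

definition partial_order_on_rel :: "'a set \<Rightarrow> ('a \<Rightarrow> 'a \<Rightarrow> bool) \<Rightarrow> bool" where
  "partial_order_on_rel A le \<longleftrightarrow>
     (\<forall>a\<in>A. le a a) \<and>
     (\<forall>a\<in>A. \<forall>b\<in>A. le a b \<and> le b a \<longrightarrow> a = b) \<and>
     (\<forall>a\<in>A. \<forall>b\<in>A. \<forall>c\<in>A. le a b \<and> le b c \<longrightarrow> le a c)"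

definition is_glb :: "'a set \<Rightarrow> ('a \<Rightarrow> 'a \<Rightarrow> bool) \<Rightarrow> 'a \<Rightarrow> 'a \<Rightarrow> 'a \<Rightarrow> bool" where
  "is_glb A le x y z \<longleftrightarrow> z \<in> A \<and> le z x \<and> le z y \<and> (\<forall>w\<in>A. le w x \<and> le w y \<longrightarrow> le w z)"

definition is_lub :: "'a set \<Rightarrow> ('a \<Rightarrow> 'a \<Rightarrow> bool) \<Rightarrow> 'a \<Rightarrow> 'a \<Rightarrow> 'a \<Rightarrow> bool" where
  "is_lub A le x y z \<longleftrightarrow> z \<in> A \<and> le x z \<and> le y z \<and> (\<forall>w\<in>A. le x w \<and> le y w \<longrightarrow> le z w)"

definition meet_of :: "'a set \<Rightarrow> ('a \<Rightarrow> 'a \<Rightarrow> bool) \<Rightarrow> 'a \<Rightarrow> 'a \<Rightarrow> 'a" where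
  "meet_of A le x y = (THE z. is_glb A le x y z)"

definition join_of :: "'a set \<Rightarrow> ('a \<Rightarrow> 'a \<Rightarrow> bool) \<Rightarrow> 'a \<Rightarrow> 'a \<Rightarrow> 'a" where
  "join_of A le x y = (THE z. is_lub A le x y z)"

definition bottom_of :: "'a set \<Rightarrow> ('a \<Rightarrow> 'a \<Rightarrow> bool) \<Rightarrow> 'a" where
  "bottom_of A le = (THE z. z \<in> A \<and> (\<forall>a\<in>A. le z a))"

definition gen_boolean_algebra :: "'b set \<Rightarrow> ('b \<Rightarrow> 'b \<Rightarrow> bool) \<Rightarrow> bool" where
  "gen_boolean_algebra B le \<longleftrightarrow>
     partial_order_on_rel B le \<and>
     (\<forall>a\<in>B. \<forall>b\<in>B. \<exists>c. is_glb B le a b c) \<and>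
     (\<forall>a\<in>B. \<forall>b\<in>B. \<exists>c. is_lub B le a b c) \<and>
     (\<exists>z\<in>B. \<forall>a\<in>B. le z a) \<and>
     (\<forall>a\<in>B. \<forall>b\<in>B. \<forall>c\<in>B.
        meet_of B le a (join_of B le b c) = join_of B le (meet_of B le a b) (meet_of B le a c)) \<and>
     (\<forall>a\<in>B. \<forall>b\<in>B. le a b \<longrightarrow>
        (\<exists>c\<in>B. meet_of B le a c = bottom_of B le \<and> join_of B le a c = b))"

definition rel_diff :: "'b set \<Rightarrow> ('b \<Rightarrow> 'b \<Rightarrow> bool) \<Rightarrow> 'b \<Rightarrow> 'b \<Rightarrow> 'b" where
  "rel_diff B le b a = (THE c. c \<in> B \<and> le c b \<and> meet_of B le c a = bottom_of B le \<and>
                              join_of B le c (meet_of B le a b) = b)"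

definition ba_morphism :: "'b set \<Rightarrow> ('b \<Rightarrow> 'b \<Rightarrow> bool) \<Rightarrow> 'c set \<Rightarrow> ('c \<Rightarrow> 'c \<Rightarrow> bool)
    \<Rightarrow> ('b \<Rightarrow> 'c) \<Rightarrow> bool" where
  "ba_morphism B1 le1 B2 le2 f \<longleftrightarrow>
     (\<forall>a\<in>B1. f a \<in> B2) \<and>
     (\<forall>a\<in>B1. \<forall>b\<in>B1. f (meet_of B1 le1 a b) = meet_of B2 le2 (f a) (f b)) \<and>
     (\<forall>a\<in>B1. \<forall>b\<in>B1. f (join_of B1 le1 a b) = join_of B2 le2 (f a) (f b)) \<and>
     f (bottom_of B1 le1) = bottom_of B2 le2 \<and>
     (\<forall>a\<in>B1. \<forall>b\<in>B1. f (rel_diff B1 le1 a b) = rel_diff B2 le2 (f a) (f b))"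

text \<open>A presheaf over B is given by the carrier X, the projection p, and the restriction
  res, where  res x f  stands for  x|^{p x}_f  (meaningful for f \<le> p x).\<close>

definition bs_le :: "('x \<Rightarrow> 'b) \<Rightarrow> ('x \<Rightarrow> 'b \<Rightarrow> 'x) \<Rightarrow> ('b \<Rightarrow> 'b \<Rightarrow> bool) \<Rightarrow> 'x \<Rightarrow> 'x \<Rightarrow> bool" where
  "bs_le p res le x y \<longleftrightarrow> le (p x) (p y) \<and> x = res y (p x)"

definition boolean_set :: "'x set \<Rightarrow> ('x \<Rightarrow> 'b) \<Rightarrow> ('x \<Rightarrow> 'b \<Rightarrow> 'x) \<Rightarrow> 'b set \<Rightarrow> ('b \<Rightarrow> 'b \<Rightarrow> bool) \<Rightarrow> bool" where
  "boolean_set X p res B le \<longleftrightarrow>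
     gen_boolean_algebra B le \<and>
     (\<forall>x\<in>X. p x \<in> B) \<and>
     (\<forall>e\<in>B. \<exists>x\<in>X. p x = e) \<and>
     (\<forall>x\<in>X. \<forall>f\<in>B. le f (p x) \<longrightarrow> res x f \<in> X \<and> p (res x f) = f) \<and>
     (\<forall>x\<in>X. res x (p x) = x) \<and>
     (\<forall>x\<in>X. \<forall>f\<in>B. \<forall>g\<in>B. le g f \<and> le f (p x) \<longrightarrow> res (res x f) g = res x g) \<and>
     (\<exists>z\<in>X. \<forall>x\<in>X. bs_le p res le z x) \<and>
     (\<forall>x\<in>X. \<forall>y\<in>X.
        (\<exists>m. is_glb X (bs_le p res le) x y m \<and> p m = meet_of B le (p x) (p y))
        \<longrightarrow> (\<exists>j. is_lub X (bs_le p res le) x y j)) \<and>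
     (\<forall>x\<in>X. p x = bottom_of B le \<longrightarrow> x = bottom_of X (bs_le p res le))"

definition has_binary_meets :: "'x set \<Rightarrow> ('x \<Rightarrow> 'b) \<Rightarrow> ('x \<Rightarrow> 'b \<Rightarrow> 'x) \<Rightarrow> ('b \<Rightarrow> 'b \<Rightarrow> bool) \<Rightarrow> bool" where
  "has_binary_meets X p res le \<longleftrightarrow>
     (\<forall>x\<in>X. \<forall>y\<in>X. \<exists>m. is_glb X (bs_le p res le) x y m)"

definition bs_morphism ::
  "'x set \<Rightarrow> ('x \<Rightarrow> 'b) \<Rightarrow> ('x \<Rightarrow> 'b \<Rightarrow> 'x) \<Rightarrow> 'b set \<Rightarrow> ('b \<Rightarrow> 'b \<Rightarrow> bool) \<Rightarrow>
   'y set \<Rightarrow> ('y \<Rightarrow> 'c) \<Rightarrow> ('y \<Rightarrow> 'c \<Rightarrow> 'y) \<Rightarrow> 'c set \<Rightarrow> ('c \<Rightarrow> 'c \<Rightarrow> bool) \<Rightarrow>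
   ('x \<Rightarrow> 'y) \<Rightarrow> ('b \<Rightarrow> 'c) \<Rightarrow> bool" where
  "bs_morphism X p resX B1 le1 Y q resY B2 le2 \<phi> \<phi>b \<longleftrightarrow>
     (\<forall>x\<in>X. \<phi> x \<in> Y) \<and>
     ba_morphism B1 le1 B2 le2 \<phi>b \<and>
     (\<forall>x\<in>X. q (\<phi> x) = \<phi>b (p x)) \<and>
     (\<forall>x\<in>X. \<forall>b\<in>B1. le1 b (p x) \<longrightarrow> \<phi> (resX x b) = resY (\<phi> x) (\<phi>b b))"

definition preserves_binary_meets ::
  "'x set \<Rightarrow> ('x \<Rightarrow> 'b) \<Rightarrow> ('x \<Rightarrow> 'b \<Rightarrow> 'x) \<Rightarrow> ('b \<Rightarrow> 'b \<Rightarrow> bool) \<Rightarrow>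
   'y set \<Rightarrow> ('y \<Rightarrow> 'c) \<Rightarrow> ('y \<Rightarrow> 'c \<Rightarrow> 'y) \<Rightarrow> ('c \<Rightarrow> 'c \<Rightarrow> bool) \<Rightarrow>
   ('x \<Rightarrow> 'y) \<Rightarrow> bool" where
  "preserves_binary_meets X p resX le1 Y q resY le2 \<phi> \<longleftrightarrow>
     (\<forall>x\<in>X. \<forall>y\<in>X. \<phi> (meet_of X (bs_le p resX le1) x y) = meet_of Y (bs_le q resY le2) (\<phi> x) (\<phi> y))"

definition proper_filter :: "'a set \<Rightarrow> ('a \<Rightarrow> 'a \<Rightarrow> bool) \<Rightarrow> 'a set \<Rightarrow> bool" where
  "proper_filter A le F \<longleftrightarrow>
     F \<subseteq> A \<and> F \<noteq> {} \<and> F \<noteq> A \<and>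
     (\<forall>x\<in>F. \<forall>y\<in>F. \<exists>z\<in>F. le z x \<and> le z y) \<and>
     (\<forall>x\<in>F. \<forall>y\<in>A. le x y \<longrightarrow> y \<in> F)"

definition ultrafilter_of :: "'a set \<Rightarrow> ('a \<Rightarrow> 'a \<Rightarrow> bool) \<Rightarrow> 'a set \<Rightarrow> bool" where
  "ultrafilter_of A le F \<longleftrightarrow> proper_filter A le F \<and>
     (\<forall>F'. proper_filter A le F' \<and> F \<subseteq> F' \<longrightarrow> F' = F)"

definition phi_hat ::
  "'x set \<Rightarrow> ('x \<Rightarrow> 'b) \<Rightarrow> ('x \<Rightarrow> 'b \<Rightarrow> 'x) \<Rightarrow> ('b \<Rightarrow> 'b \<Rightarrow> bool) \<Rightarrow>
   ('x \<Rightarrow> 'y) \<Rightarrow> 'y set \<Rightarrow> 'x set set" where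
  "phi_hat X p resX le1 \<phi> G =
     {H. ultrafilter_of X (bs_le p resX le1) H \<and> H \<subseteq> {x \<in> X. \<phi> x \<in> G}}"

end

theory Submission
  imports Defs
begin


lemma glb_unique_gen:
  assumes "\<forall>a\<in>A. \<forall>b\<in>A. le a b \<and> le b a \<longrightarrow> a = b"
    and "is_glb A le x y z" and "is_glb A le x y z'"
  shows "z = z'" using assms unfolding is_glb_def by blast

lemma lub_unique_gen:
  assumes "\<forall>a\<in>A. \<forall>b\<in>A. le a b \<and> le b a \<longrightarrow> a = b"
    and "is_lub A le x y z" and "is_lub A le x y z'"
  shows "z = z'" using assms unfolding is_lub_def by blast

lemma meet_of_eq:
  assumes "\<forall>a\<in>A. \<forall>b\<in>A. le a b \<and> le b a \<longrightarrow> a = b" and "is_glb A le x y z"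
  shows "meet_of A le x y = z"
  unfolding meet_of_def using assms glb_unique_gen[OF assms(1)] by (intro the_equality) auto

lemma join_of_eq:
  assumes "\<forall>a\<in>A. \<forall>b\<in>A. le a b \<and> le b a \<longrightarrow> a = b" and "is_lub A le x y z"
  shows "join_of A le x y = z"
  unfolding join_of_def using assms lub_unique_gen[OF assms(1)] by (intro the_equality) auto

lemma bottom_of_eq:
  assumes "\<forall>a\<in>A. \<forall>b\<in>A. le a b \<and> le b a \<longrightarrow> a = b" and "z \<in> A" "\<forall>a\<in>A. le z a"
  shows "bottom_of A le = z"
  unfolding bottom_of_def using assms by (intro the_equality) auto

locale bset =
  fixes X :: "'x set" and p :: "'x \<Rightarrow> 'b" and res :: "'x \<Rightarrow> 'b \<Rightarrow> 'x"
    and B :: "'b set" and le :: "'b \<Rightarrow> 'b \<Rightarrow> bool"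
  assumes bs: "boolean_set X p res B le"
begin

abbreviation "leX \<equiv> bs_le p res le"
abbreviation "bB \<equiv> bottom_of B le"
abbreviation "mt \<equiv> meet_of B le"
abbreviation "jn \<equiv> join_of B le"
abbreviation "botX \<equiv> bottom_of X leX"

lemma gba: "gen_boolean_algebra B le" using bs unfolding boolean_set_def by blast
lemma po: "partial_order_on_rel B le" using gba unfolding gen_boolean_algebra_def by blast
lemma le_refl: "a \<in> B \<Longrightarrow> le a a" using po unfolding partial_order_on_rel_def by blast
lemma antisymB: "\<forall>a\<in>B. \<forall>b\<in>B. le a b \<and> le b a \<longrightarrow> a = b" using po unfolding partial_order_on_rel_def by blast
lemma le_antisym: "a \<in> B \<Longrightarrow> b \<in> B \<Longrightarrow> le a b \<Longrightarrow> le b a \<Longrightarrow> a = b" using antisymB by blast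
lemma le_trans: "a \<in> B \<Longrightarrow> b \<in> B \<Longrightarrow> c \<in> B \<Longrightarrow> le a b \<Longrightarrow> le b c \<Longrightarrow> le a c"
  using po unfolding partial_order_on_rel_def by blast

lemma mt_glb: assumes "a \<in> B" "b \<in> B" shows "is_glb B le a b (mt a b)"
proof -
  obtain c where "is_glb B le a b c" using gba assms unfolding gen_boolean_algebra_def by blast
  thus ?thesis using meet_of_eq[OF antisymB] by simp
qed

lemma jn_lub: assumes "a \<in> B" "b \<in> B" shows "is_lub B le a b (jn a b)"
proof -
  obtain c where "is_lub B le a b c" using gba assms unfolding gen_boolean_algebra_def by blast
  thus ?thesis using join_of_eq[OF antisymB] by simp
qed

lemma mt_in: "a \<in> B \<Longrightarrow> b \<in> B \<Longrightarrow> mt a b \<in> B" using mt_glb unfolding is_glb_def by blast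
lemma mt_le1: "a \<in> B \<Longrightarrow> b \<in> B \<Longrightarrow> le (mt a b) a" using mt_glb unfolding is_glb_def by blast
lemma mt_le2: "a \<in> B \<Longrightarrow> b \<in> B \<Longrightarrow> le (mt a b) b" using mt_glb unfolding is_glb_def by blast
lemma mt_greatest: "a \<in> B \<Longrightarrow> b \<in> B \<Longrightarrow> w \<in> B \<Longrightarrow> le w a \<Longrightarrow> le w b \<Longrightarrow> le w (mt a b)"
  using mt_glb unfolding is_glb_def by blast
lemma jn_in: "a \<in> B \<Longrightarrow> b \<in> B \<Longrightarrow> jn a b \<in> B" using jn_lub unfolding is_lub_def by blast
lemma jn_ge1: "a \<in> B \<Longrightarrow> b \<in> B \<Longrightarrow> le a (jn a b)" using jn_lub unfolding is_lub_def by blast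
lemma jn_ge2: "a \<in> B \<Longrightarrow> b \<in> B \<Longrightarrow> le b (jn a b)" using jn_lub unfolding is_lub_def by blast

lemma bot_prop: "bB \<in> B \<and> (\<forall>a\<in>B. le bB a)"
proof -
  obtain z where "z \<in> B" "\<forall>a\<in>B. le z a" using gba unfolding gen_boolean_algebra_def by blast
  thus ?thesis using bottom_of_eq[OF antisymB] by simp
qed
lemma bot_in: "bB \<in> B" using bot_prop by blast
lemma bot_le: "a \<in> B \<Longrightarrow> le bB a" using bot_prop by blast
lemma le_bot: "a \<in> B \<Longrightarrow> le a bB \<Longrightarrow> a = bB" using bot_prop le_antisym by blast

lemma mt_eq_left: "a \<in> B \<Longrightarrow> b \<in> B \<Longrightarrow> le a b \<Longrightarrow> mt a b = a"
  by (rule meet_of_eq[OF antisymB]) (auto simp: is_glb_def le_refl)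
lemma mt_eq_right: "a \<in> B \<Longrightarrow> b \<in> B \<Longrightarrow> le b a \<Longrightarrow> mt a b = b"
  by (rule meet_of_eq[OF antisymB]) (auto simp: is_glb_def le_refl)
lemma jn_bot: "a \<in> B \<Longrightarrow> jn a bB = a"
  by (rule join_of_eq[OF antisymB]) (auto simp: is_lub_def le_refl bot_le bot_in)
lemma jn_bot_bot: "jn bB bB = bB" using jn_bot bot_in by blast
lemma distrib: "a \<in> B \<Longrightarrow> b \<in> B \<Longrightarrow> c \<in> B \<Longrightarrow> mt a (jn b c) = jn (mt a b) (mt a c)"
  using gba unfolding gen_boolean_algebra_def by blast
lemma compl: "a \<in> B \<Longrightarrow> b \<in> B \<Longrightarrow> le a b \<Longrightarrow> \<exists>c\<in>B. mt a c = bB \<and> jn a c = b"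
  using gba unfolding gen_boolean_algebra_def by blast
lemma mt_mono: "a \<in> B \<Longrightarrow> b \<in> B \<Longrightarrow> c \<in> B \<Longrightarrow> le a b \<Longrightarrow> le (mt a c) (mt b c)"
  by (meson le_trans mt_greatest mt_in mt_le1 mt_le2)
lemma mt_comm: "a \<in> B \<Longrightarrow> b \<in> B \<Longrightarrow> mt a b = mt b a"
  by (meson le_antisym mt_greatest mt_in mt_le1 mt_le2)
lemma jn_comm: "a \<in> B \<Longrightarrow> b \<in> B \<Longrightarrow> jn a b = jn b a"
  using jn_lub unfolding is_lub_def by (meson le_antisym)

end
context bset begin

lemma p_in: "x \<in> X \<Longrightarrow> p x \<in> B" using bs unfolding boolean_set_def by blast
lemma surj_p: "e \<in> B \<Longrightarrow> \<exists>x\<in>X. p x = e" using bs unfolding boolean_set_def by blast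
lemma res_in: "x \<in> X \<Longrightarrow> f \<in> B \<Longrightarrow> le f (p x) \<Longrightarrow> res x f \<in> X"
  using bs unfolding boolean_set_def by blast
lemma p_res: "x \<in> X \<Longrightarrow> f \<in> B \<Longrightarrow> le f (p x) \<Longrightarrow> p (res x f) = f"
  using bs unfolding boolean_set_def by blast
lemma res_id: "x \<in> X \<Longrightarrow> res x (p x) = x" using bs unfolding boolean_set_def by blast
lemma res_res: "x \<in> X \<Longrightarrow> f \<in> B \<Longrightarrow> g \<in> B \<Longrightarrow> le g f \<Longrightarrow> le f (p x) \<Longrightarrow> res (res x f) g = res x g"
  using bs unfolding boolean_set_def by blast
lemma least_ex: "\<exists>z\<in>X. \<forall>x\<in>X. leX z x" using bs unfolding boolean_set_def by blast
lemma bot_ax: "x \<in> X \<Longrightarrow> p x = bB \<Longrightarrow> x = botX" using bs unfolding boolean_set_def by blast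

lemma leX_refl: "x \<in> X \<Longrightarrow> leX x x" unfolding bs_le_def using le_refl p_in res_id by auto
lemma leX_p: "leX z x \<Longrightarrow> le (p z) (p x)" unfolding bs_le_def by blast
lemma leX_eq: "leX z x \<Longrightarrow> z = res x (p z)" unfolding bs_le_def by blast
lemma antisymX: "\<forall>a\<in>X. \<forall>b\<in>X. leX a b \<and> leX b a \<longrightarrow> a = b"
  unfolding bs_le_def by (metis le_antisym p_in res_id)
lemma leX_trans: "x \<in> X \<Longrightarrow> y \<in> X \<Longrightarrow> z \<in> X \<Longrightarrow> leX x y \<Longrightarrow> leX y z \<Longrightarrow> leX x z"
  unfolding bs_le_def by (metis le_trans p_in res_res)
lemma leX_res: "x \<in> X \<Longrightarrow> e \<in> B \<Longrightarrow> le e (p x) \<Longrightarrow> leX (res x e) x"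
  unfolding bs_le_def using p_res by auto
lemma res_mono: "x \<in> X \<Longrightarrow> e1 \<in> B \<Longrightarrow> e2 \<in> B \<Longrightarrow> le e1 e2 \<Longrightarrow> le e2 (p x) \<Longrightarrow> leX (res x e1) (res x e2)"
  unfolding bs_le_def using p_res res_res le_trans p_in by (metis)

lemma botX_prop: "botX \<in> X \<and> (\<forall>x\<in>X. leX botX x) \<and> p botX = bB"
proof -
  obtain z where z: "z \<in> X" "\<forall>x\<in>X. leX z x" using least_ex by blast
  have b: "botX = z" using bottom_of_eq[OF antisymX] z by blast
  obtain x where x: "x \<in> X" "p x = bB" using surj_p bot_in by blast
  have "le (p z) bB" using z x leX_p by metis
  hence "p z = bB" using le_bot p_in z by blast
  thus ?thesis using b z by simp
qed
lemma botX_in: "botX \<in> X" using botX_prop by blast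
lemma botX_le: "x \<in> X \<Longrightarrow> leX botX x" using botX_prop by blast
lemma p_botX: "p botX = bB" using botX_prop by blast
lemma leX_botX: "x \<in> X \<Longrightarrow> leX x botX \<Longrightarrow> x = botX" using antisymX botX_in botX_le by blast
lemma res_bot: "x \<in> X \<Longrightarrow> res x bB = botX"
  using bot_ax res_in p_res bot_in bot_le p_in by metis

lemma pf_sub: "proper_filter X leX F \<Longrightarrow> F \<subseteq> X" unfolding proper_filter_def by blast
lemma pf_up: "proper_filter X leX F \<Longrightarrow> x \<in> F \<Longrightarrow> y \<in> X \<Longrightarrow> leX x y \<Longrightarrow> y \<in> F"
  unfolding proper_filter_def by blast
lemma pf_dir: "proper_filter X leX F \<Longrightarrow> x \<in> F \<Longrightarrow> y \<in> F \<Longrightarrow> \<exists>z\<in>F. leX z x \<and> leX z y"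
  unfolding proper_filter_def by blast
lemma pf_nobot: "proper_filter X leX F \<Longrightarrow> botX \<notin> F"
  unfolding proper_filter_def using botX_le by blast
lemma pf_intro: "F \<subseteq> X \<Longrightarrow> F \<noteq> {} \<Longrightarrow> botX \<notin> F \<Longrightarrow> (\<forall>x\<in>F. \<forall>y\<in>F. \<exists>z\<in>F. leX z x \<and> leX z y)
   \<Longrightarrow> (\<forall>x\<in>F. \<forall>y\<in>X. leX x y \<longrightarrow> y \<in> F) \<Longrightarrow> proper_filter X leX F"
  unfolding proper_filter_def using botX_in by blast

lemma res_meet_in:
  assumes F: "proper_filter X leX F" and y: "y \<in> X" and a: "a1 \<in> B" "a2 \<in> B" "le a1 (p y)" "le a2 (p y)"
    and r: "res y a1 \<in> F" "res y a2 \<in> F"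
  shows "res y (mt a1 a2) \<in> F"
proof -
  obtain z where z: "z \<in> F" "leX z (res y a1)" "leX z (res y a2)" using pf_dir[OF F r] by blast
  have zX: "z \<in> X" using z F pf_sub by blast
  have pz1: "le (p z) a1" using leX_p[OF z(2)] p_res y a by metis
  have pz2: "le (p z) a2" using leX_p[OF z(3)] p_res y a by metis
  have m: "mt a1 a2 \<in> B" using mt_in a by blast
  have pzm: "le (p z) (mt a1 a2)" using mt_greatest pz1 pz2 a p_in zX by blast
  have mle: "le (mt a1 a2) (p y)" using mt_le1 le_trans a m p_in y by meson
  have ze: "z = res y (p z)" using leX_eq[OF z(2)] p_res res_res y a p_in zX pz1 by metis
  have "leX z (res y (mt a1 a2))"
    using res_mono[OF y p_in[OF zX] m pzm mle] ze by simp
  thus ?thesis using pf_up[OF F z(1)] res_in[OF y m mle] by blast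
qed

lemma disj:
  assumes F: "proper_filter X leX F" and uv: "u \<in> F" "v \<in> F" and m: "mt (p u) (p v) = bB"
  shows False
proof -
  obtain z where z: "z \<in> F" "leX z u" "leX z v" using pf_dir[OF F uv] by blast
  have X: "z \<in> X" "u \<in> X" "v \<in> X" using z uv F pf_sub by auto
  have "le (p z) bB" using mt_greatest[of "p u" "p v" "p z"] leX_p z p_in X m by metis
  hence "p z = bB" using le_bot p_in X by blast
  hence "z = botX" using bot_ax X by blast
  thus False using z pf_nobot F by blast
qed

end
context bset begin

lemma uf_pf: "ultrafilter_of X leX G \<Longrightarrow> proper_filter X leX G" unfolding ultrafilter_of_def by blast
lemma uf_max: "ultrafilter_of X leX G \<Longrightarrow> proper_filter X leX F \<Longrightarrow> G \<subseteq> F \<Longrightarrow> F = G"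
  unfolding ultrafilter_of_def by blast

lemma prime_aux:
  assumes U: "ultrafilter_of X leX G" and yG: "y \<in> G" and c: "c \<in> B" "le c (p y)"
  shows "res y c \<in> G \<or> (\<exists>a\<in>B. le a (p y) \<and> res y a \<in> G \<and> mt a c = bB)"
proof -
  have G: "proper_filter X leX G" using U uf_pf by blast
  have y: "y \<in> X" using yG G pf_sub by blast
  define F1 where "F1 = {w \<in> X. \<exists>a\<in>B. le a (p y) \<and> res y a \<in> G \<and> leX (res y (mt a c)) w}"
  show ?thesis
  proof (cases "botX \<in> F1")
    case True
    then obtain a where a: "a \<in> B" "le a (p y)" "res y a \<in> G" "leX (res y (mt a c)) botX"
      unfolding F1_def by blast
    have m: "mt a c \<in> B" using mt_in a c by blast
    have ml: "le (mt a c) (p y)" using mt_le1 le_trans a m p_in y c by meson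
    have "res y (mt a c) = botX" using leX_botX res_in[OF y m ml] a(4) by blast
    hence "mt a c = bB" using p_res[OF y m ml] p_botX by simp
    thus ?thesis using a by blast
  next
    case False
    have sub: "F1 \<subseteq> X" unfolding F1_def by blast
    have ne: "res y (mt (p y) c) \<in> F1"
    proof -
      have "mt (p y) c \<in> B" using mt_in p_in y c by blast
      moreover have "le (mt (p y) c) (p y)" using mt_le1 p_in y c by blast
      moreover have "res y (p y) \<in> G" using res_id y yG by simp
      ultimately show ?thesis unfolding F1_def using y p_in le_refl res_in leX_refl by blast
    qed
    have dir: "\<forall>u\<in>F1. \<forall>v\<in>F1. \<exists>z\<in>F1. leX z u \<and> leX z v"
    proof (intro ballI)
      fix u v assume "u \<in> F1" "v \<in> F1"
      then obtain a1 a2 where a: "a1 \<in> B" "le a1 (p y)" "res y a1 \<in> G" "leX (res y (mt a1 c)) u"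
        "a2 \<in> B" "le a2 (p y)" "res y a2 \<in> G" "leX (res y (mt a2 c)) v" "u \<in> X" "v \<in> X"
        unfolding F1_def by blast
      define a3 where "a3 = mt a1 a2"
      have a3: "a3 \<in> B" "le a3 (p y)" "res y a3 \<in> G" 
        using res_meet_in[OF G y a(1) a(5) a(2) a(6) a(3) a(7)] mt_in mt_le1 le_trans a p_in y
        unfolding a3_def by (blast, meson, blast)
      have m3: "mt a3 c \<in> B" "le (mt a3 c) (p y)" using mt_in mt_le1 le_trans a3 c p_in y by (blast, meson)
      have m1: "mt a1 c \<in> B" "le (mt a1 c) (p y)" using mt_in mt_le1 le_trans a c p_in y by (blast, meson)
      have m2: "mt a2 c \<in> B" "le (mt a2 c) (p y)" using mt_in mt_le1 le_trans a c p_in y by (blast, meson)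
      have l1: "le (mt a3 c) (mt a1 c)" using mt_mono a3 a c mt_le1 unfolding a3_def by blast
      have l2: "le (mt a3 c) (mt a2 c)" using mt_mono a3 a c mt_le2 unfolding a3_def by blast
      have z: "res y (mt a3 c) \<in> F1" unfolding F1_def using a3 m3 res_in y leX_refl by blast
      have "leX (res y (mt a3 c)) u"
        using leX_trans res_mono[OF y m3(1) m1(1) l1 m1(2)] res_in y m3 m1 a(4) a(9) by blast
      moreover have "leX (res y (mt a3 c)) v"
        using leX_trans res_mono[OF y m3(1) m2(1) l2 m2(2)] res_in y m3 m2 a(8) a(10) by blast
      ultimately show "\<exists>z\<in>F1. leX z u \<and> leX z v" using z by blast
    qed
    have up: "\<forall>u\<in>F1. \<forall>v\<in>X. leX u v \<longrightarrow> v \<in> F1"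
    proof (intro ballI impI)
      fix u v assume "u \<in> F1" "v \<in> X" "leX u v"
      then obtain a where a: "a \<in> B" "le a (p y)" "res y a \<in> G" "leX (res y (mt a c)) u" "u \<in> X"
        unfolding F1_def by blast
      have "mt a c \<in> B" "le (mt a c) (p y)" using mt_in mt_le1 le_trans a c p_in y by (blast, meson)
      hence "leX (res y (mt a c)) v" using leX_trans a res_in y \<open>v \<in> X\<close> \<open>leX u v\<close> by blast
      thus "v \<in> F1" unfolding F1_def using a \<open>v \<in> X\<close> by blast
    qed
    have F1: "proper_filter X leX F1" using pf_intro[OF sub _ False dir up] ne by blast
    have GF: "G \<subseteq> F1"
    proof
      fix g assume gG: "g \<in> G"
      obtain z where z: "z \<in> G" "leX z y" "leX z g" using pf_dir[OF G yG gG] by blast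
      have zX: "z \<in> X" "g \<in> X" using z gG G pf_sub by auto
      have pz: "p z \<in> B" "le (p z) (p y)" using p_in zX leX_p z by auto
      have ze: "res y (p z) = z" using leX_eq[OF z(2)] by simp
      have mz: "mt (p z) c \<in> B" "le (mt (p z) c) (p z)" using mt_in mt_le1 pz c by auto
      have "leX (res y (mt (p z) c)) z" using res_mono[OF y mz(1) pz(1) mz(2) pz(2)] ze by simp
      hence "leX (res y (mt (p z) c)) g" using leX_trans res_in y mz le_trans pz p_in zX z(3) by meson
      thus "g \<in> F1" unfolding F1_def using pz z(1) ze zX by auto
    qed
    have "F1 = G" using uf_max[OF U F1 GF] .
    moreover have "res y c \<in> F1"
    proof -
      have "mt (p y) c = c" using mt_eq_right p_in y c by blast
      moreover have "res y (p y) \<in> G" using res_id y yG by simp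
      ultimately show ?thesis unfolding F1_def using res_in[OF y c] p_in[OF y] le_refl[OF p_in[OF y]] leX_refl[OF res_in[OF y c]]
        by (intro CollectI conjI bexI[where x="p y"]) auto
    qed
    ultimately show ?thesis by blast
  qed
qed

lemma prime:
  assumes U: "ultrafilter_of X leX G" and yG: "y \<in> G" and c: "c1 \<in> B" "c2 \<in> B"
    and m: "mt c1 c2 = bB" and j: "jn c1 c2 = p y"
  shows "res y c1 \<in> G \<or> res y c2 \<in> G"
proof (rule ccontr)
  assume nn: "\<not> ?thesis"
  have G: "proper_filter X leX G" using U uf_pf by blast
  have y: "y \<in> X" using yG G pf_sub by blast
  have l1: "le c1 (p y)" using jn_ge1 c j by metis
  have l2: "le c2 (p y)" using jn_ge2 c j by metis
  obtain a1 where a1: "a1 \<in> B" "le a1 (p y)" "res y a1 \<in> G" "mt a1 c1 = bB"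
    using prime_aux[OF U yG c(1) l1] nn by blast
  obtain a2 where a2: "a2 \<in> B" "le a2 (p y)" "res y a2 \<in> G" "mt a2 c2 = bB"
    using prime_aux[OF U yG c(2) l2] nn by blast
  define a where "a = mt a1 a2"
  have aB: "a \<in> B" "le a (p y)" unfolding a_def using mt_in mt_le1 le_trans a1 a2 p_in y by (blast, meson)
  have aG: "res y a \<in> G" unfolding a_def using res_meet_in[OF G y a1(1) a2(1) a1(2) a2(2) a1(3) a2(3)] .
  have "mt a c1 = bB"
    using mt_mono[of a a1 c1] a1 aB c mt_le1 a2 le_bot mt_in unfolding a_def by metis
  moreover have "mt a c2 = bB"
    using mt_mono[of a a2 c2] a1 aB c mt_le2 a2 le_bot mt_in unfolding a_def by metis
  moreover have "a = mt a (p y)" using mt_eq_left aB p_in y by metis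
  ultimately have "a = bB" using distrib[OF aB(1) c] j jn_bot_bot by metis
  hence "res y a = botX" using res_bot y by simp
  thus False using aG pf_nobot G by simp
qed

end
context bset begin

lemma glbX: "has_binary_meets X p res le \<Longrightarrow> x \<in> X \<Longrightarrow> y \<in> X \<Longrightarrow> is_glb X leX x y (meet_of X leX x y)"
  unfolding has_binary_meets_def using meet_of_eq[OF antisymX] by metis

lemma uf_exists:
  assumes d: "d \<in> X" "d \<noteq> botX"
  shows "\<exists>G. ultrafilter_of X leX G \<and> d \<in> G"
proof -
  define A where "A = {F. proper_filter X leX F \<and> d \<in> F}"
  have up0: "{w \<in> X. leX d w} \<in> A"
    unfolding A_def
  proof (intro CollectI conjI pf_intro)
    show "botX \<notin> {w \<in> X. leX d w}" using leX_botX d by blast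
    show "\<forall>x\<in>{w \<in> X. leX d w}. \<forall>y\<in>{w \<in> X. leX d w}. \<exists>z\<in>{w \<in> X. leX d w}. leX z x \<and> leX z y"
      using d leX_refl by blast
    show "\<forall>x\<in>{w \<in> X. leX d w}. \<forall>y\<in>X. leX x y \<longrightarrow> y \<in> {w \<in> X. leX d w}"
      using d leX_trans by blast
  qed (use d leX_refl in auto)
  have "\<exists>M\<in>A. \<forall>F\<in>A. M \<subseteq> F \<longrightarrow> F = M"
  proof (rule subset_Zorn_nonempty)
    show "A \<noteq> {}" using up0 by blast
    fix C assume C: "C \<noteq> {}" "subset.chain A C"
    have CA: "C \<subseteq> A" and ch: "\<forall>F1\<in>C. \<forall>F2\<in>C. F1 \<subseteq> F2 \<or> F2 \<subseteq> F1"
      using C(2) unfolding subset.chain_def by blast+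
    have pfC: "\<And>F. F \<in> C \<Longrightarrow> proper_filter X leX F" and dC: "\<And>F. F \<in> C \<Longrightarrow> d \<in> F"
      using CA unfolding A_def by blast+
    show "\<Union>C \<in> A" unfolding A_def
    proof (intro CollectI conjI pf_intro)
      show "\<Union>C \<subseteq> X" using pfC pf_sub by blast
      show "\<Union>C \<noteq> {}" using C(1) dC by blast
      show "botX \<notin> \<Union>C" using pfC pf_nobot by blast
      show "d \<in> \<Union>C" using C(1) dC by blast
      show "\<forall>x\<in>\<Union>C. \<forall>y\<in>X. leX x y \<longrightarrow> y \<in> \<Union>C" using pfC pf_up by blast
      show "\<forall>x\<in>\<Union>C. \<forall>y\<in>\<Union>C. \<exists>z\<in>\<Union>C. leX z x \<and> leX z y"
      proof (intro ballI)
        fix x y assume "x \<in> \<Union>C" "y \<in> \<Union>C"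
        then obtain F1 F2 where "F1 \<in> C" "F2 \<in> C" "x \<in> F1" "y \<in> F2" by blast
        then obtain F where "F \<in> C" "x \<in> F" "y \<in> F" using ch by blast
        thus "\<exists>z\<in>\<Union>C. leX z x \<and> leX z y" using pfC pf_dir by blast
      qed
    qed
  qed
  then obtain M where M: "M \<in> A" "\<forall>F\<in>A. M \<subseteq> F \<longrightarrow> F = M" by blast
  have "ultrafilter_of X leX M" unfolding ultrafilter_of_def
    using M unfolding A_def by blast
  thus ?thesis using M unfolding A_def by blast
qed

end

locale bmorph = X: bset X p resX B1 le1 + Y: bset Y q resY B2 le2
  for X :: "'x set" and p :: "'x \<Rightarrow> 'b" and resX :: "'x \<Rightarrow> 'b \<Rightarrow> 'x"
    and B1 :: "'b set" and le1 :: "'b \<Rightarrow> 'b \<Rightarrow> bool"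
    and Y :: "'y set" and q :: "'y \<Rightarrow> 'c" and resY :: "'y \<Rightarrow> 'c \<Rightarrow> 'y"
    and B2 :: "'c set" and le2 :: "'c \<Rightarrow> 'c \<Rightarrow> bool" +
  fixes \<phi> :: "'x \<Rightarrow> 'y" and \<phi>b :: "'b \<Rightarrow> 'c"
  assumes mor: "bs_morphism X p resX B1 le1 Y q resY B2 le2 \<phi> \<phi>b"
begin

lemma phi_in: "x \<in> X \<Longrightarrow> \<phi> x \<in> Y" using mor unfolding bs_morphism_def by blast
lemma q_phi: "x \<in> X \<Longrightarrow> q (\<phi> x) = \<phi>b (p x)" using mor unfolding bs_morphism_def by blast
lemma phi_res: "x \<in> X \<Longrightarrow> b \<in> B1 \<Longrightarrow> le1 b (p x) \<Longrightarrow> \<phi> (resX x b) = resY (\<phi> x) (\<phi>b b)"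
  using mor unfolding bs_morphism_def by blast
lemma bam: "ba_morphism B1 le1 B2 le2 \<phi>b" using mor unfolding bs_morphism_def by blast
lemma phib_in: "a \<in> B1 \<Longrightarrow> \<phi>b a \<in> B2" using bam unfolding ba_morphism_def by blast
lemma phib_mt: "a \<in> B1 \<Longrightarrow> b \<in> B1 \<Longrightarrow> \<phi>b (X.mt a b) = Y.mt (\<phi>b a) (\<phi>b b)"
  using bam unfolding ba_morphism_def by blast
lemma phib_jn: "a \<in> B1 \<Longrightarrow> b \<in> B1 \<Longrightarrow> \<phi>b (X.jn a b) = Y.jn (\<phi>b a) (\<phi>b b)"
  using bam unfolding ba_morphism_def by blast
lemma phib_bot: "\<phi>b X.bB = Y.bB" using bam unfolding ba_morphism_def by blast

lemma phib_mono: "a \<in> B1 \<Longrightarrow> b \<in> B1 \<Longrightarrow> le1 a b \<Longrightarrow> le2 (\<phi>b a) (\<phi>b b)"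
  by (metis X.mt_eq_left Y.mt_le2 phib_in phib_mt)

lemma phi_mono: "z \<in> X \<Longrightarrow> x \<in> X \<Longrightarrow> X.leX z x \<Longrightarrow> Y.leX (\<phi> z) (\<phi> x)"
proof -
  assume a: "z \<in> X" "x \<in> X" "X.leX z x"
  have "le2 (q (\<phi> z)) (q (\<phi> x))" using q_phi a phib_mono X.p_in X.leX_p by metis
  moreover have "\<phi> z = resY (\<phi> x) (q (\<phi> z))"
    using X.leX_eq[OF a(3)] phi_res a X.leX_p X.p_in q_phi by metis
  ultimately show ?thesis unfolding bs_le_def by blast
qed

lemma phi_bot: "\<phi> X.botX = Y.botX"
  using Y.bot_ax phi_in X.botX_in q_phi X.p_botX phib_bot by metis

lemma cover:
  assumes U: "ultrafilter_of Y Y.leX G" and x: "x \<in> X" and xG: "\<phi> x \<in> G"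
  shows "\<exists>H. ultrafilter_of X X.leX H \<and> x \<in> H \<and> H \<subseteq> {x \<in> X. \<phi> x \<in> G}"
proof -
  have G: "proper_filter Y Y.leX G" using U Y.uf_pf by blast
  have px: "x \<in> X" "\<phi> x \<in> Y" using x phi_in by auto
  define H where "H = {w \<in> X. \<exists>e\<in>B1. le1 e (p x) \<and> \<phi> (resX x e) \<in> G \<and> X.leX (resX x e) w}"
  have mtin: "\<phi> (resX x (X.mt e1 e2)) \<in> G"
    if e: "e1 \<in> B1" "e2 \<in> B1" "le1 e1 (p x)" "le1 e2 (p x)" "\<phi> (resX x e1) \<in> G" "\<phi> (resX x e2) \<in> G"
    for e1 e2
  proof -
    have m: "X.mt e1 e2 \<in> B1" "le1 (X.mt e1 e2) (p x)" using X.mt_in X.mt_le1 X.le_trans e X.p_in x by (blast, meson)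
    have l: "le2 (\<phi>b e1) (q (\<phi> x))" "le2 (\<phi>b e2) (q (\<phi> x))" using phib_mono e X.p_in x q_phi by auto
    have "resY (\<phi> x) (Y.mt (\<phi>b e1) (\<phi>b e2)) \<in> G"
      using Y.res_meet_in[OF G px(2) phib_in[OF e(1)] phib_in[OF e(2)] l] e phi_res x by simp
    thus ?thesis using phi_res[OF x m] phib_mt e by simp
  qed
  have sub: "H \<subseteq> X" unfolding H_def by blast
  have xH: "x \<in> H" unfolding H_def using x X.p_in X.le_refl X.res_id xG X.leX_refl by (intro CollectI conjI bexI[where x="p x"]) auto
  have nb: "X.botX \<notin> H"
  proof
    assume "X.botX \<in> H"
    then obtain e where e: "e \<in> B1" "le1 e (p x)" "\<phi> (resX x e) \<in> G" "X.leX (resX x e) X.botX"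
      unfolding H_def by blast
    hence "resX x e = X.botX" using X.leX_botX X.res_in x by blast
    thus False using e phi_bot Y.pf_nobot G by simp
  qed
  have dir: "\<forall>u\<in>H. \<forall>v\<in>H. \<exists>z\<in>H. X.leX z u \<and> X.leX z v"
  proof (intro ballI)
    fix u v assume "u \<in> H" "v \<in> H"
    then obtain e1 e2 where a: "e1 \<in> B1" "le1 e1 (p x)" "\<phi> (resX x e1) \<in> G" "X.leX (resX x e1) u"
      "e2 \<in> B1" "le1 e2 (p x)" "\<phi> (resX x e2) \<in> G" "X.leX (resX x e2) v" "u \<in> X" "v \<in> X"
      unfolding H_def by blast
    have m: "X.mt e1 e2 \<in> B1" "le1 (X.mt e1 e2) (p x)" using X.mt_in X.mt_le1 X.le_trans a X.p_in x by (blast, meson)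
    have zH: "resX x (X.mt e1 e2) \<in> H" unfolding H_def
      using m mtin[OF a(1) a(5) a(2) a(6) a(3) a(7)] X.res_in[OF x m] X.leX_refl by blast
    have "X.leX (resX x (X.mt e1 e2)) u"
      using X.leX_trans X.res_mono[OF x m(1) a(1) X.mt_le1[OF a(1) a(5)] a(2)] X.res_in x m a by blast
    moreover have "X.leX (resX x (X.mt e1 e2)) v"
      using X.leX_trans X.res_mono[OF x m(1) a(5) X.mt_le2[OF a(1) a(5)] a(6)] X.res_in x m a by blast
    ultimately show "\<exists>z\<in>H. X.leX z u \<and> X.leX z v" using zH by blast
  qed
  have up: "\<forall>u\<in>H. \<forall>v\<in>X. X.leX u v \<longrightarrow> v \<in> H"
    unfolding H_def using X.leX_trans X.res_in x by blast
  have Hpf: "proper_filter X X.leX H" using X.pf_intro[OF sub _ nb dir up] xH by blast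
  have Hsub: "H \<subseteq> {x \<in> X. \<phi> x \<in> G}"
  proof
    fix w assume "w \<in> H"
    then obtain e where e: "e \<in> B1" "le1 e (p x)" "\<phi> (resX x e) \<in> G" "X.leX (resX x e) w" "w \<in> X"
      unfolding H_def by blast
    have "Y.leX (\<phi> (resX x e)) (\<phi> w)" using phi_mono e X.res_in x by blast
    thus "w \<in> {x \<in> X. \<phi> x \<in> G}" using Y.pf_up[OF G e(3)] phi_in e by blast
  qed
  have Huf: "ultrafilter_of X X.leX H" unfolding ultrafilter_of_def
  proof (intro conjI allI impI Hpf)
    fix F' assume F': "proper_filter X X.leX F' \<and> H \<subseteq> F'"
    hence F: "proper_filter X X.leX F'" and HF: "H \<subseteq> F'" by auto
    have "F' \<subseteq> H"
    proof
      fix w assume wF: "w \<in> F'"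
      obtain z where z: "z \<in> F'" "X.leX z w" "X.leX z x" using X.pf_dir[OF F wF] xH HF by blast
      have zX: "z \<in> X" "w \<in> X" using z wF F X.pf_sub by auto
      define e where "e = p z"
      have e: "e \<in> B1" "le1 e (p x)" "resX x e = z" using X.p_in zX X.leX_p z X.leX_eq unfolding e_def by auto
      obtain c where c: "c \<in> B1" "X.mt e c = X.bB" "X.jn e c = p x" using X.compl[OF e(1) X.p_in[OF x] e(2)] by blast
      have cl: "le1 c (p x)" using X.jn_ge2 e c by metis
      have "Y.mt (\<phi>b e) (\<phi>b c) = Y.bB" using phib_mt phib_bot e c by metis
      moreover have "Y.jn (\<phi>b e) (\<phi>b c) = q (\<phi> x)" using phib_jn q_phi x e c by metis
      ultimately have "resY (\<phi> x) (\<phi>b e) \<in> G \<or> resY (\<phi> x) (\<phi>b c) \<in> G"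
        using Y.prime[OF U xG phib_in[OF e(1)] phib_in[OF c(1)]] by blast
      hence "\<phi> z \<in> G \<or> \<phi> (resX x c) \<in> G" using phi_res x e c cl by metis
      thus "w \<in> H"
      proof
        assume "\<phi> z \<in> G"
        hence "z \<in> H" unfolding H_def using e zX X.leX_refl by blast
        thus "w \<in> H" using up zX z by blast
      next
        assume "\<phi> (resX x c) \<in> G"
        hence "resX x c \<in> H" unfolding H_def using c cl X.res_in x X.leX_refl by blast
        hence "resX x c \<in> F'" using HF by blast
        moreover have "X.mt (p z) (p (resX x c)) = X.bB" using X.p_res x c cl e c unfolding e_def by simp
        ultimately show "w \<in> H" using X.disj[OF F z(1)] by blast
      qed
    qed
    thus "F' = H" using HF by blast
  qed
  show ?thesis using Huf xH Hsub by blast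
qed

end
context bmorph begin

lemma main:
  assumes mX: "has_binary_meets X p resX le1" and mY: "has_binary_meets Y q resY le2"
  shows "preserves_binary_meets X p resX le1 Y q resY le2 \<phi> \<longleftrightarrow>
         (\<forall>G. ultrafilter_of Y (bs_le q resY le2) G \<longrightarrow>
            (\<forall>H1\<in>phi_hat X p resX le1 \<phi> G. \<forall>H2\<in>phi_hat X p resX le1 \<phi> G. H1 = H2))"
proof
  assume pres: "preserves_binary_meets X p resX le1 Y q resY le2 \<phi>"
  have pr: "\<And>a b. a \<in> X \<Longrightarrow> b \<in> X \<Longrightarrow> \<phi> (meet_of X X.leX a b) = meet_of Y Y.leX (\<phi> a) (\<phi> b)"
    using pres unfolding preserves_binary_meets_def by blast
  show "\<forall>G. ultrafilter_of Y (bs_le q resY le2) G \<longrightarrow>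
            (\<forall>H1\<in>phi_hat X p resX le1 \<phi> G. \<forall>H2\<in>phi_hat X p resX le1 \<phi> G. H1 = H2)"
  proof (intro allI impI ballI)
    fix G H1 H2 assume U: "ultrafilter_of Y Y.leX G" and h1: "H1 \<in> phi_hat X p resX le1 \<phi> G"
      and h2: "H2 \<in> phi_hat X p resX le1 \<phi> G"
    have G: "proper_filter Y Y.leX G" using U Y.uf_pf by blast
    have U1: "ultrafilter_of X X.leX H1" and S1: "H1 \<subseteq> {x \<in> X. \<phi> x \<in> G}" using h1 unfolding phi_hat_def by auto
    have U2: "ultrafilter_of X X.leX H2" and S2: "H2 \<subseteq> {x \<in> X. \<phi> x \<in> G}" using h2 unfolding phi_hat_def by auto
    have P1: "proper_filter X X.leX H1" and P2: "proper_filter X X.leX H2" using U1 U2 X.uf_pf by auto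
    define F where "F = {w \<in> X. \<exists>a\<in>H1. \<exists>b\<in>H2. X.leX (meet_of X X.leX a b) w}"
    have mG: "\<phi> (meet_of X X.leX a b) \<in> G" if "a \<in> H1" "b \<in> H2" for a b
    proof -
      have ab: "a \<in> X" "b \<in> X" "\<phi> a \<in> G" "\<phi> b \<in> G" using that S1 S2 by auto
      obtain z where z: "z \<in> G" "Y.leX z (\<phi> a)" "Y.leX z (\<phi> b)" using Y.pf_dir[OF G ab(3,4)] by blast
      have "is_glb Y Y.leX (\<phi> a) (\<phi> b) (meet_of Y Y.leX (\<phi> a) (\<phi> b))"
        using Y.glbX[OF mY] phi_in ab by blast
      hence "Y.leX z (meet_of Y Y.leX (\<phi> a) (\<phi> b))" "meet_of Y Y.leX (\<phi> a) (\<phi> b) \<in> Y"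
        using z G Y.pf_sub unfolding is_glb_def by blast+
      thus ?thesis using Y.pf_up[OF G z(1)] pr ab by simp
    qed
    have glb: "is_glb X X.leX a b (meet_of X X.leX a b)" if "a \<in> H1" "b \<in> H2" for a b
      using X.glbX[OF mX] that P1 P2 X.pf_sub by blast
    have FP: "proper_filter X X.leX F"
    proof (rule X.pf_intro)
      show "F \<subseteq> X" unfolding F_def by blast
      obtain a b where "a \<in> H1" "b \<in> H2" using P1 P2 unfolding proper_filter_def by blast
      thus "F \<noteq> {}" unfolding F_def using glb X.leX_refl unfolding is_glb_def by blast
      show "X.botX \<notin> F"
      proof
        assume "X.botX \<in> F"
        then obtain a b where ab: "a \<in> H1" "b \<in> H2" "X.leX (meet_of X X.leX a b) X.botX" unfolding F_def by blast
        hence "meet_of X X.leX a b = X.botX" using X.leX_botX glb unfolding is_glb_def by blast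
        thus False using mG[OF ab(1,2)] phi_bot Y.pf_nobot G by simp
      qed
      show "\<forall>x\<in>F. \<forall>y\<in>X. X.leX x y \<longrightarrow> y \<in> F" unfolding F_def
        using X.leX_trans glb unfolding is_glb_def by blast
      show "\<forall>x\<in>F. \<forall>y\<in>F. \<exists>z\<in>F. X.leX z x \<and> X.leX z y"
      proof (intro ballI)
        fix u v assume "u \<in> F" "v \<in> F"
        then obtain a b a' b' where ab: "a \<in> H1" "b \<in> H2" "X.leX (meet_of X X.leX a b) u"
          "a' \<in> H1" "b' \<in> H2" "X.leX (meet_of X X.leX a' b') v" "u \<in> X" "v \<in> X" unfolding F_def by blast
        obtain a'' where a'': "a'' \<in> H1" "X.leX a'' a" "X.leX a'' a'" using X.pf_dir[OF P1 ab(1,4)] by blast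
        obtain b'' where b'': "b'' \<in> H2" "X.leX b'' b" "X.leX b'' b'" using X.pf_dir[OF P2 ab(2,5)] by blast
        let ?m = "meet_of X X.leX a'' b''"
        have XX: "a \<in> X" "b \<in> X" "a' \<in> X" "b' \<in> X" "a'' \<in> X" "b'' \<in> X"
          using ab a'' b'' P1 P2 X.pf_sub by blast+
        have g'': "is_glb X X.leX a'' b'' ?m" using glb a'' b'' by blast
        have mX: "?m \<in> X" using g'' unfolding is_glb_def by blast
        have "X.leX ?m (meet_of X X.leX a b)"
          using glb[OF ab(1,2)] g'' X.leX_trans XX mX a'' b'' unfolding is_glb_def by meson
        hence 1: "X.leX ?m u" using X.leX_trans mX ab glb[OF ab(1,2)] unfolding is_glb_def by blast
        have "X.leX ?m (meet_of X X.leX a' b')"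
          using glb[OF ab(4,5)] g'' X.leX_trans XX mX a'' b'' unfolding is_glb_def by meson
        hence 2: "X.leX ?m v" using X.leX_trans mX ab glb[OF ab(4,5)] unfolding is_glb_def by blast
        have "?m \<in> F" unfolding F_def using mX a'' b'' X.leX_refl by blast
        thus "\<exists>z\<in>F. X.leX z u \<and> X.leX z v" using 1 2 by blast
      qed
    qed
    have "H1 \<subseteq> F"
    proof
      fix a assume a: "a \<in> H1"
      obtain b where "b \<in> H2" using P2 unfolding proper_filter_def by blast
      thus "a \<in> F" unfolding F_def using a glb P1 X.pf_sub unfolding is_glb_def by blast
    qed
    moreover have "H2 \<subseteq> F"
    proof
      fix b assume b: "b \<in> H2"
      obtain a where "a \<in> H1" using P1 unfolding proper_filter_def by blast
      thus "b \<in> F" unfolding F_def using b glb P2 X.pf_sub unfolding is_glb_def by blast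
    qed
    ultimately show "H1 = H2" using X.uf_max[OF U1 FP] X.uf_max[OF U2 FP] by simp
  qed
next
  assume part: "\<forall>G. ultrafilter_of Y (bs_le q resY le2) G \<longrightarrow>
            (\<forall>H1\<in>phi_hat X p resX le1 \<phi> G. \<forall>H2\<in>phi_hat X p resX le1 \<phi> G. H1 = H2)"
  show "preserves_binary_meets X p resX le1 Y q resY le2 \<phi>"
    unfolding preserves_binary_meets_def
  proof (intro ballI)
    fix x y assume x: "x \<in> X" and y: "y \<in> X"
    define m where "m = meet_of X X.leX x y"
    define n where "n = meet_of Y Y.leX (\<phi> x) (\<phi> y)"
    have gm: "is_glb X X.leX x y m" unfolding m_def using X.glbX[OF mX x y] .
    have gn: "is_glb Y Y.leX (\<phi> x) (\<phi> y) n" unfolding n_def using Y.glbX[OF mY] phi_in x y by blast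
    have mXX: "m \<in> X" and nY: "n \<in> Y" using gm gn unfolding is_glb_def by auto
    have pm: "\<phi> m \<in> Y" using phi_in mXX by blast
    have mn: "Y.leX (\<phi> m) n"
      using gm gn phi_mono x y mXX pm unfolding is_glb_def by blast
    show "\<phi> m = n"
    proof (rule ccontr)
      assume ne: "\<phi> m \<noteq> n"
      define a where "a = q (\<phi> m)"
      define b where "b = q n"
      have ab: "a \<in> B2" "b \<in> B2" "le2 a b" using Y.p_in pm nY Y.leX_p mn unfolding a_def b_def by auto
      have "a \<noteq> b" using Y.leX_eq[OF mn] Y.res_id nY ne unfolding a_def b_def by metis
      obtain c where c: "c \<in> B2" "Y.mt a c = Y.bB" "Y.jn a c = b" using Y.compl[OF ab] by blast
      have cb: "le2 c b" using Y.jn_ge2 ab c by metis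
      have cne: "c \<noteq> Y.bB" using Y.jn_bot ab c \<open>a \<noteq> b\<close> by metis
      define d where "d = resY n c"
      have d: "d \<in> Y" "q d = c" using Y.res_in Y.p_res nY c cb unfolding d_def b_def by auto
      have dne: "d \<noteq> Y.botX" using d cne Y.p_botX by metis
      obtain G where U: "ultrafilter_of Y Y.leX G" and dG: "d \<in> G" using Y.uf_exists[OF d(1) dne] by blast
      have G: "proper_filter Y Y.leX G" using U Y.uf_pf by blast
      have "Y.leX d n" using Y.leX_res nY c cb unfolding d_def b_def by blast
      hence nG: "n \<in> G" using Y.pf_up[OF G dG nY] by blast
      have xG: "\<phi> x \<in> G" and yG: "\<phi> y \<in> G" using gn nG Y.pf_up[OF G] phi_in x y unfolding is_glb_def by blast+
      obtain H1 where H1: "ultrafilter_of X X.leX H1" "x \<in> H1" "H1 \<subseteq> {x \<in> X. \<phi> x \<in> G}"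
        using cover[OF U x xG] by blast
      obtain H2 where H2: "ultrafilter_of X X.leX H2" "y \<in> H2" "H2 \<subseteq> {x \<in> X. \<phi> x \<in> G}"
        using cover[OF U y yG] by blast
      have "H1 \<in> phi_hat X p resX le1 \<phi> G" "H2 \<in> phi_hat X p resX le1 \<phi> G"
        unfolding phi_hat_def using H1 H2 by auto
      hence "H1 = H2" using part U by blast
      hence yH1: "y \<in> H1" using H2 by simp
      have P1: "proper_filter X X.leX H1" using H1 X.uf_pf by blast
      obtain z where z: "z \<in> H1" "X.leX z x" "X.leX z y" using X.pf_dir[OF P1 H1(2) yH1] by blast
      have "X.leX z m" using gm z P1 X.pf_sub unfolding is_glb_def by blast
      hence "m \<in> H1" using X.pf_up[OF P1 z(1) mXX] by blast
      hence "\<phi> m \<in> G" using H1 by blast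
      moreover have "Y.mt (q d) (q (\<phi> m)) = Y.bB" using d c Y.mt_comm ab unfolding a_def by metis
      ultimately show False using Y.disj[OF G dG] by blast
    qed
  qed
qed

end

theorem proposition3p16:
  fixes X :: "'x set" and p :: "'x \<Rightarrow> 'b" and resX :: "'x \<Rightarrow> 'b \<Rightarrow> 'x"
    and B1 :: "'b set" and le1 :: "'b \<Rightarrow> 'b \<Rightarrow> bool"
    and Y :: "'y set" and q :: "'y \<Rightarrow> 'c" and resY :: "'y \<Rightarrow> 'c \<Rightarrow> 'y"
    and B2 :: "'c set" and le2 :: "'c \<Rightarrow> 'c \<Rightarrow> bool"
    and \<phi> :: "'x \<Rightarrow> 'y" and \<phi>b :: "'b \<Rightarrow> 'c"
  assumes "boolean_set X p resX B1 le1"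
    and "boolean_set Y q resY B2 le2"
    and "has_binary_meets X p resX le1"
    and "has_binary_meets Y q resY le2"
    and "bs_morphism X p resX B1 le1 Y q resY B2 le2 \<phi> \<phi>b"
  shows "preserves_binary_meets X p resX le1 Y q resY le2 \<phi> \<longleftrightarrow>
         (\<forall>G. ultrafilter_of Y (bs_le q resY le2) G \<longrightarrow>
            (\<forall>H1\<in>phi_hat X p resX le1 \<phi> G. \<forall>H2\<in>phi_hat X p resX le1 \<phi> G. H1 = H2))"
proof -
  interpret bmorph X p resX B1 le1 Y q resY B2 le2 \<phi> \<phi>b
    using assms by (simp add: bmorph_def bmorph_axioms_def bset_def)
  show ?thesis using main assms(3,4) by blast
qed

end
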